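(* Let $\tilde\omega=\log^*\tilde\delta$, computed in the convolution algebra of $(\mathcal A,\diamond,\Delta_{\mathcal A})$. Then $\tilde\omega(\mathbf 1)=0$ and $\tilde\omega(x^s)=\frac{(-1)^{s+1}}{s}$ for $s\ge1$, and $$\omega=\tilde\omega\circ\Lambda,$$ where $\omega=\log^*\delta$ in the convolution algebra of $\mathcal H_{CK}$.
   Context: Let $k$ be a field of characteristic $0$. $\mathcal A=k[x]$ ($x^0=\mathbf 1$) with the quasi-shuffle product $\diamond$ determined by $\mathbf 1\diamond u=u\diamond\mathbf 1=u$, $x^k\diamond x^l=(x^{k-1}\diamond x^l)x+(x^k\diamond x^{l-1})x+(x^{k-1}\diamond x^{l-1})x$ for $k,l\ge1$, and the deconcatenation coproduct $\Delta_{\mathcal A}(x^n)=\sum_{r=0}^nx^r\otimes x^{n-r}$, is a connected graded Hopf algebra with counit $\varepsilon_{\mathcal A}$. $\tilde\delta:\mathcal A\to k$ is linear with $\tilde\delta(\mathbf 1)=\tilde\delta(x)=1$, $\tilde\delta(x^s)=0$ for $s\ge2$. $\mathcal H_{CK}$ is the Connes–Kreimer Hopf algebra of rooted forests (free commutative algebra on nonempty non-planar rooted trees, unit the empty forest, counit $\varepsilon$, coproduct by admissible cuts: $\Delta_{CK}(u)=\sum v\otimes w$ over decompositions of the vertex set of $u$ into $V\sqcup W$ such that no vertex of $V$ lies strictly below a vertex of $W$, $v,w$ the induced forests). $B_+$ grafts a forest onto a new root; $\Lambda:\mathcal H_{CK}\to\mathcal A$ is the unique unital algebra morphism with $\Lambda(B_+(t_1\cdots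 t_n))=(\Lambda(t_1)\diamond\cdots\diamond\Lambda(t_n))x$ (it is a Hopf algebra morphism). $\delta$ is the character of $\mathcal H_{CK}$ with $\delta(\bullet)=1$ and $\delta(t)=0$ for trees with at least two vertices. For a character $\chi$ of either Hopf algebra, $\log^*\chi=\sum_{n\ge1}\frac{(-1)^{n+1}}{n}(\chi-\text{counit})^{*n}$, with $*$ the convolution product. *)

theory Defs
  imports "HOL-Library.Multiset" "HOL-Computational_Algebra.Polynomial"
begin

text \<open>Elements of A are polynomials (the vector space k[x], basis x^n = monom 1 n).
  Linear functionals on A are represented by their values on the basis x^n,
  i.e. by functions nat => k.\<close>

fun qsh :: "nat \<Rightarrow> nat \<Rightarrow> 'k::field poly" where
  "qsh 0 l = monom 1 l"
| "qsh (Suc k) 0 = monom 1 (Suc k)"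
| "qsh (Suc k) (Suc l) = (qsh k (Suc l) + qsh (Suc k) l + qsh k l) * [:0, 1:]"

definition diamond :: "'k::field poly \<Rightarrow> 'k poly \<Rightarrow> 'k poly" where
  "diamond p q = (\<Sum>i\<le>degree p. \<Sum>j\<le>degree q. smult (coeff p i * coeff q j) (qsh i j))"

definition lin_ext :: "(nat \<Rightarrow> 'k::field) \<Rightarrow> 'k poly \<Rightarrow> 'k" where
  "lin_ext \<phi> p = (\<Sum>i\<le>degree p. coeff p i * \<phi> i)"

definition epsA :: "nat \<Rightarrow> 'k::field" where
  "epsA n = (if n = 0 then 1 else 0)"

definition convA :: "(nat \<Rightarrow> 'k::field) \<Rightarrow> (nat \<Rightarrow> 'k) \<Rightarrow> nat \<Rightarrow> 'k" where
  "convA \<phi> \<psi> n = (\<Sum>r\<le>n. \<phi> r * \<psi> (n - r))"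

primrec convA_pow :: "(nat \<Rightarrow> 'k::field) \<Rightarrow> nat \<Rightarrow> nat \<Rightarrow> 'k" where
  "convA_pow \<phi> 0 = epsA"
| "convA_pow \<phi> (Suc n) = convA \<phi> (convA_pow \<phi> n)"

text \<open>log^* chi = sum_{n>=1} (-1)^(n+1)/n (chi - eps)^{*n}, evaluated pointwise
  as the (locally finite) sum over the nonzero terms.\<close>
definition logA :: "(nat \<Rightarrow> 'k::field) \<Rightarrow> nat \<Rightarrow> 'k" where
  "logA \<chi> m = (let T = (\<lambda>n. ((-1) ^ (n + 1) / of_nat n) * convA_pow (\<lambda>u. \<chi> u - epsA u) n m)
               in \<Sum>n\<in>{n. 1 \<le> n \<and> T n \<noteq> 0}. T n)"

definition deltaA :: "nat \<Rightarrow> 'k::field" where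
  "deltaA s = (if s \<le> 1 then 1 else 0)"

text \<open>Non-planar rooted trees: a root with a multiset of subtrees (B_+ = Node).
  Forests (the monomial basis of H_CK) are multisets of trees; the empty forest is the unit.\<close>
datatype tree = Node "tree multiset"

type_synonym forest = "tree multiset"

text \<open>Multiplication of multisets of pairs (v,w) (the algebra structure of H_CK \<otimes> H_CK
  on basis elements).\<close>
definition mult_pairs :: "(forest \<times> forest) multiset \<Rightarrow> (forest \<times> forest) multiset \<Rightarrow> (forest \<times> forest) multiset" where
  "mult_pairs A B = sum_mset (image_mset (\<lambda>(v1, w1). image_mset (\<lambda>(v2, w2). (v1 + v2, w1 + w2)) B) A)"

text \<open>Admissible cuts: the multiset of pairs (v,w) over all decompositions V \<sqcup> W of the
  vertex set with no vertex of V strictly below a vertex of W.  For a tree B_+(f): either the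
  root is in V (then all vertices are in V), or the root is in W, and then V \<sqcup> W restricted to
  f is an arbitrary admissible decomposition of f.  For a forest the decompositions are
  independent on each tree.\<close>
primrec cop_tree :: "tree \<Rightarrow> (forest \<times> forest) multiset" where
  "cop_tree (Node f) =
     {# ({#Node f#}, {#}) #} +
     image_mset (\<lambda>(v, w). (v, {#Node w#}))
       (fold_mset mult_pairs {# ({#}, {#}) #} (image_mset cop_tree f))"

definition cop_forest :: "forest \<Rightarrow> (forest \<times> forest) multiset" where
  "cop_forest u = fold_mset mult_pairs {# ({#}, {#}) #} (image_mset cop_tree u)"

text \<open>Linear functionals on H_CK are represented by their values on forests.\<close>
definition epsCK :: "forest \<Rightarrow> 'k::field" where
  "epsCK u = (if u = {#} then 1 else 0)"

definition convCK :: "(forest \<Rightarrow> 'k::field) \<Rightarrow> (forest \<Rightarrow> 'k) \<Rightarrow> forest \<Rightarrow> 'k" where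
  "convCK \<phi> \<psi> u = sum_mset (image_mset (\<lambda>(v, w). \<phi> v * \<psi> w) (cop_forest u))"

primrec convCK_pow :: "(forest \<Rightarrow> 'k::field) \<Rightarrow> nat \<Rightarrow> forest \<Rightarrow> 'k" where
  "convCK_pow \<phi> 0 = epsCK"
| "convCK_pow \<phi> (Suc n) = convCK \<phi> (convCK_pow \<phi> n)"

definition logCK :: "(forest \<Rightarrow> 'k::field) \<Rightarrow> forest \<Rightarrow> 'k" where
  "logCK \<chi> u = (let T = (\<lambda>n. ((-1) ^ (n + 1) / of_nat n) * convCK_pow (\<lambda>v. \<chi> v - epsCK v) n u)
               in \<Sum>n\<in>{n. 1 \<le> n \<and> T n \<noteq> 0}. T n)"

definition delta_tree :: "tree \<Rightarrow> 'k::field" where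
  "delta_tree t = (if t = Node {#} then 1 else 0)"

definition deltaCK :: "forest \<Rightarrow> 'k::field" where
  "deltaCK u = prod_mset (image_mset delta_tree u)"

primrec Lambda_tree :: "tree \<Rightarrow> 'k::field poly" where
  "Lambda_tree (Node f) = fold_mset diamond 1 (image_mset Lambda_tree f) * [:0, 1:]"

definition Lambda :: "forest \<Rightarrow> 'k::field poly" where
  "Lambda u = fold_mset diamond 1 (image_mset Lambda_tree u)"

end

theory Submission imports Defs begin


definition ev :: "'k::field poly \<Rightarrow> nat \<Rightarrow> 'k" where
  "ev p N = (\<Sum>n\<le>N. coeff p n * of_nat (N choose n))"

lemma ev_add: "ev (p + q) N = ev p N + ev q N"
  by (simp add: ev_def algebra_simps sum.distrib)
lemma ev_diff: "ev (p - q) N = ev p N - ev q N"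
  by (simp add: ev_def algebra_simps sum_subtractf)
lemma ev_smult: "ev (smult c p) N = c * ev p N"
  by (simp add: ev_def algebra_simps sum_distrib_left)
lemma ev_sum: "ev (\<Sum>i\<in>I. f i) N = (\<Sum>i\<in>I. ev (f i) N)"
proof (induction I rule: infinite_finite_induct)
  case (insert x F) then show ?case by (simp add: ev_add)
qed (auto simp: ev_def)
lemma ev_monom: "ev (monom 1 l) N = of_nat (N choose l)"
proof (cases "l \<le> N")
  case True
  have "(\<Sum>n\<le>N. coeff (monom (1::'a) l) n * of_nat (N choose n)) = (\<Sum>n\<le>N. if l = n then of_nat (N choose n) else 0)"
    by (rule sum.cong) (auto simp: coeff_monom)
  then show ?thesis using True by (simp add: ev_def)
next
  case False then show ?thesis by (simp add: ev_def coeff_monom binomial_eq_0)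
qed
lemma ev_one: "ev 1 N = 1"
  using ev_monom[of 0 N] by (simp add: one_pCons monom_0)
lemma ev_0: "ev p 0 = coeff p 0"
  by (simp add: ev_def)

lemma ev_alt: assumes "degree p \<le> D" shows "ev p N = (\<Sum>n\<le>D. coeff p n * of_nat (N choose n))"
proof -
  have "ev p N = (\<Sum>n\<le>max N D. coeff p n * of_nat (N choose n))"
    unfolding ev_def by (rule sum.mono_neutral_left) (auto simp: binomial_eq_0)
  also have "\<dots> = (\<Sum>n\<le>D. coeff p n * of_nat (N choose n))"
    using assms by (intro sum.mono_neutral_right) (auto simp: coeff_eq_0)
  finally show ?thesis .
qed

lemma coeff_mult_x: "coeff ((p::'k::field poly) * [:0, 1:]) n = (if n = 0 then 0 else coeff p (n - 1))"
  by (cases n) (simp_all add: coeff_pCons)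

lemma ev_Suc: "ev q (Suc N) = ev q N + (\<Sum>n\<le>N. coeff q (Suc n) * of_nat (N choose n))"
proof -
  have 1: "ev q (Suc N) = coeff q 0 + (\<Sum>n\<le>N. coeff q (Suc n) * of_nat (Suc N choose Suc n))"
    unfolding ev_def by (subst sum.atMost_Suc_shift) simp
  have "ev q N = (\<Sum>n\<le>Suc N. coeff q n * of_nat (N choose n))"
    unfolding ev_def by (simp add: binomial_eq_0)
  also have "\<dots> = coeff q 0 + (\<Sum>n\<le>N. coeff q (Suc n) * of_nat (N choose Suc n))"
    by (subst sum.atMost_Suc_shift) simp
  finally have 2: "ev q N = \<dots>" .
  show ?thesis unfolding 1 2 by (simp add: algebra_simps sum.distrib)
qed

lemma ev_mult_x: "ev (p * [:0, 1:]) N = (\<Sum>K<N. ev p K)"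
proof (induction N)
  case 0 then show ?case by (simp add: ev_0 coeff_mult_x)
next
  case (Suc N)
  have "(\<Sum>n\<le>N. coeff (p * [:0, 1:]) (Suc n) * of_nat (N choose n)) = ev p N"
    by (simp add: coeff_mult_x ev_def)
  then show ?case using Suc by (simp add: ev_Suc)
qed

lemma ev_pCons0: "ev (pCons 0 p) N = (\<Sum>K<N. ev p K)"
  using ev_mult_x[of p N] by simp

lemma binom_inj:
  assumes "\<And>N. (\<Sum>n\<le>N. a n * of_nat (N choose n)) = (0::'k::field)"
  shows "a n = 0"
proof (induction n rule: less_induct)
  case (less n)
  have "0 = (\<Sum>m\<le>n. a m * of_nat (n choose m))" using assms by simp
  also have "\<dots> = (\<Sum>m<n. a m * of_nat (n choose m)) + a n"
    by (simp add: lessThan_Suc_atMost[symmetric])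
  also have "(\<Sum>m<n. a m * of_nat (n choose m)) = 0" using less by simp
  finally show ?case by simp
qed

lemma ev_inj: assumes "\<And>N. ev p N = ev q N" shows "p = q"
proof (rule poly_eqI)
  fix n
  have "coeff p n - coeff q n = 0"
    by (rule binom_inj[where a="\<lambda>n. coeff p n - coeff q n"])
       (use assms[unfolded ev_def] in \<open>simp add: algebra_simps sum_subtractf\<close>)
  then show "coeff p n = coeff q n" by simp
qed

lemma binom_step_sum:
  "(\<Sum>K<N. (K choose k)*(K choose Suc l) + (K choose Suc k)*(K choose l) + (K choose k)*(K choose l))
   = (N choose Suc k)*(N choose Suc l)"
  by (induction N) (simp_all add: algebra_simps)

lemma ev_qsh: "ev (qsh k l :: 'k::field poly) N = of_nat (N choose k) * of_nat (N choose l)"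
proof (induction k l arbitrary: N rule: qsh.induct)
  case (1 l) then show ?case by (simp add: ev_monom)
next
  case (2 k) then show ?case by (simp add: ev_monom)
next
  case (3 k l)
  have "ev (qsh (Suc k) (Suc l) :: 'k poly) N =
    (\<Sum>K<N. of_nat ((K choose k)*(K choose Suc l) + (K choose Suc k)*(K choose l) + (K choose k)*(K choose l)))"
    by (simp add: ev_pCons0 ev_add 3)
  also have "\<dots> = of_nat ((N choose Suc k)*(N choose Suc l))"
    by (simp only: of_nat_sum[symmetric] binom_step_sum)
  finally show ?case by simp
qed

lemma ev_diamond: "ev (diamond p q) N = ev p N * ev q N"
proof -
  have "ev (diamond p q) N = (\<Sum>i\<le>degree p. \<Sum>j\<le>degree q. coeff p i * coeff q j * (of_nat (N choose i) * of_nat (N choose j)))"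
    unfolding diamond_def by (simp add: ev_sum ev_smult ev_qsh)
  also have "\<dots> = ev p N * ev q N"
    by (simp add: ev_alt[OF order_refl, of p] ev_alt[OF order_refl, of q] sum_product algebra_simps)
  finally show ?thesis .
qed

lemma diamond_comm: "diamond p q = diamond q p"
  by (rule ev_inj) (simp add: ev_diamond)
lemma diamond_assoc: "diamond (diamond p q) r = diamond p (diamond q r)"
  by (rule ev_inj) (simp add: ev_diamond)

interpretation diamond: comp_fun_commute "diamond :: 'k::field poly \<Rightarrow> _"
  by unfold_locales (auto simp: fun_eq_iff diamond_comm diamond_assoc, metis diamond_assoc diamond_comm)



lemma mp_empty_l[simp]: "mult_pairs {#} B = {#}"
  by (simp add: mult_pairs_def)
lemma mp_add_l[simp]: "mult_pairs (add_mset a A) B = image_mset (\<lambda>(v2, w2). (fst a + v2, snd a + w2)) B + mult_pairs A B"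
  by (cases a) (simp add: mult_pairs_def)
lemma mp_plus_l: "mult_pairs (A1 + A2) B = mult_pairs A1 B + mult_pairs A2 B"
  by (simp add: mult_pairs_def)
lemma mp_empty_r[simp]: "mult_pairs A {#} = {#}"
  by (induction A) auto
lemma mp_add_r[simp]: "mult_pairs A (add_mset b B) = image_mset (\<lambda>(v1, w1). (v1 + fst b, w1 + snd b)) A + mult_pairs A B"
  by (induction A) (auto split: prod.splits)
lemma mp_plus_r: "mult_pairs A (B1 + B2) = mult_pairs A B1 + mult_pairs A B2"
  by (induction A) (auto simp: add_ac)
lemma mp_comm: "mult_pairs A B = mult_pairs B A"
  by (induction A) (auto simp: add_ac split: prod.splits intro!: image_mset_cong)
lemma mp_image: "mult_pairs (image_mset (\<lambda>(v2, w2). (v + v2, w + w2)) B) C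
   = image_mset (\<lambda>(v2, w2). (v + v2, w + w2)) (mult_pairs B C)"
  by (induction B) (auto simp: add_ac mult_pairs_def image_mset.compositionality comp_def split: prod.splits intro!: image_mset_cong)
lemma mp_assoc: "mult_pairs (mult_pairs A B) C = mult_pairs A (mult_pairs B C)"
  by (induction A) (auto simp: mp_plus_l mp_image split: prod.splits)

interpretation mp: comp_fun_commute mult_pairs
  by unfold_locales (auto simp: fun_eq_iff, metis mp_assoc mp_comm)



lemma diamond_one: "diamond p 1 = p"
  by (rule ev_inj) (simp add: ev_diamond ev_one)

lemma Lambda_empty[simp]: "Lambda {#} = 1"
  by (simp add: Lambda_def)
lemma Lambda_add: "Lambda (add_mset t u) = diamond (Lambda_tree t) (Lambda u)"
  by (simp add: Lambda_def)
lemma Lambda_single: "Lambda {#t#} = Lambda_tree t"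
  by (simp add: Lambda_add diamond_one)
lemma Lambda_tree_Node: "Lambda_tree (Node f) = Lambda f * [:0, 1:]"
  by (simp only: Lambda_def Lambda_tree.simps)
declare Lambda_tree.simps[simp del]

lemma ev_Lambda_plus: "ev (Lambda (u + v)) N = ev (Lambda u) N * ev (Lambda v) N"
  by (induction u) (simp_all add: ev_one Lambda_add ev_diamond)

lemma ev_Lambda_Node: "ev (Lambda_tree (Node f)) N = (\<Sum>K<N. ev (Lambda f) K)"
  unfolding Lambda_tree_Node by (rule ev_mult_x)

lemma cop_forest_empty[simp]: "cop_forest {#} = {#({#}, {#})#}"
  by (simp add: cop_forest_def)
lemma cop_forest_add: "cop_forest (add_mset t u) = mult_pairs (cop_tree t) (cop_forest u)"
  by (simp add: cop_forest_def)
lemma cop_tree_Node: "cop_tree (Node f) = {# ({#Node f#}, {#}) #} + image_mset (\<lambda>(v, w). (v, {#Node w#})) (cop_forest f)"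
  by (simp only: cop_tree.simps cop_forest_def)
declare cop_tree.simps[simp del]

lemma mp_sum:
  fixes F G :: "forest \<Rightarrow> 'k::comm_ring_1"
  assumes F: "\<And>a b. F (a + b) = F a * F b" and G: "\<And>a b. G (a + b) = G a * G b"
  shows "sum_mset (image_mset (\<lambda>(v,w). F v * G w) (mult_pairs A B))
       = sum_mset (image_mset (\<lambda>(v,w). F v * G w) A) * sum_mset (image_mset (\<lambda>(v,w). F v * G w) B)"
proof (induction A)
  case empty then show ?case by simp
next
  case (add a A)
  obtain a1 a2 where a: "a = (a1, a2)" by (cases a)
  have Ha: "sum_mset (image_mset (\<lambda>(v,w). F v * G w) (image_mset (\<lambda>(v2, w2). (fst a + v2, snd a + w2)) B))
     = F (fst a) * G (snd a) * sum_mset (image_mset (\<lambda>(v,w). F v * G w) B)"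
    by (simp add: sum_mset_distrib_left image_mset.compositionality comp_def F G case_prod_beta algebra_simps)
  have "sum_mset (image_mset (\<lambda>(v,w). F v * G w) (mult_pairs (add_mset a A) B))
     = sum_mset (image_mset (\<lambda>(v,w). F v * G w) (image_mset (\<lambda>(v2, w2). (fst a + v2, snd a + w2)) B))
       + sum_mset (image_mset (\<lambda>(v,w). F v * G w) (mult_pairs A B))"
    by (simp only: mp_add_l image_mset_union sum_mset.union)
  also have "\<dots> = F (fst a) * G (snd a) * sum_mset (image_mset (\<lambda>(v,w). F v * G w) B)
       + sum_mset (image_mset (\<lambda>(v,w). F v * G w) A) * sum_mset (image_mset (\<lambda>(v,w). F v * G w) B)"
    by (simp only: Ha add.IH)
  also have "\<dots> = sum_mset (image_mset (\<lambda>(v,w). F v * G w) (add_mset a A)) * sum_mset (image_mset (\<lambda>(v,w). F v * G w) B)"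
    by (simp add: a algebra_simps)
  finally show ?case .
qed

definition Sp :: "nat \<Rightarrow> nat \<Rightarrow> (forest \<times> forest) multiset \<Rightarrow> 'k::field" where
  "Sp N M C = sum_mset (image_mset (\<lambda>(v,w). ev (Lambda v) N * ev (Lambda w) M) C)"

lemma sum_split_add: "(\<Sum>K<N + (M::nat). g K) = (\<Sum>K<N. g K) + (\<Sum>K<M. g (N + K))"
  by (induction M) (simp_all add: algebra_simps)

lemma sum_swap_mset: "(\<Sum>i\<in>I. sum_mset (image_mset (f i) C)) = sum_mset (image_mset (\<lambda>x. \<Sum>i\<in>I. f i x) C)"
  by (induction C) (simp_all add: sum.distrib)

lemma forest_from_trees:
  assumes "\<forall>t\<in>#g. \<forall>N M. ev (Lambda_tree t) (N + M) = (Sp N M (cop_tree t) :: 'k::field)"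
  shows "ev (Lambda g) (N + M) = (Sp N M (cop_forest g) :: 'k)"
  using assms
proof (induction g arbitrary: N M rule: multiset_induct)
  case empty then show ?case by (simp add: Sp_def ev_one)
next
  case (add t g)
  have "Sp N M (cop_forest (add_mset t g)) = (Sp N M (cop_tree t) :: 'k) * Sp N M (cop_forest g)"
    unfolding cop_forest_add Sp_def
    by (rule mp_sum) (simp_all add: ev_Lambda_plus)
  then show ?case using add by (simp add: Lambda_add ev_diamond)
qed

lemma main_ev: "ev (Lambda_tree t) (N + M) = (Sp N M (cop_tree t) :: 'k::field)"
proof (induction t arbitrary: N M)
  case (Node f)
  have IH: "ev (Lambda f) (N + M) = (Sp N M (cop_forest f) :: 'k)" for N M
    by (rule forest_from_trees) (use Node in auto)
  have "Sp N M (cop_tree (Node f)) = ev (Lambda_tree (Node f)) N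
      + sum_mset (image_mset (\<lambda>x. ev (Lambda (fst x)) N * ev (Lambda_tree (Node (snd x))) M) (cop_forest f))"
    by (simp add: Sp_def cop_tree_Node Lambda_single ev_one image_mset.compositionality comp_def case_prod_beta)
  also have "sum_mset (image_mset (\<lambda>x. ev (Lambda (fst x)) N * ev (Lambda_tree (Node (snd x))) M) (cop_forest f))
     = (\<Sum>K<M. (Sp N K (cop_forest f) :: 'k))"
    by (simp add: ev_Lambda_Node Sp_def sum_swap_mset sum_distrib_left case_prod_beta)
  also have "\<dots> = (\<Sum>K<M. ev (Lambda f) (N + K))" by (simp add: IH)
  finally show ?case by (simp add: ev_Lambda_Node sum_split_add)
qed

lemma main_ev_forest: "ev (Lambda u) (N + M) = (Sp N M (cop_forest u) :: 'k::field)"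
  by (rule forest_from_trees) (simp add: main_ev)



definition Ctens :: "forest \<Rightarrow> nat \<Rightarrow> nat \<Rightarrow> 'k::field" where
  "Ctens u r s = sum_mset (image_mset (\<lambda>(v,w). coeff (Lambda v) r * coeff (Lambda w) s) (cop_forest u))"

lemma ev_shift_double:
  "ev (p::'k::field poly) (N + M) = (\<Sum>r\<le>N. \<Sum>s\<le>M. coeff p (r + s) * (of_nat (N choose r) * of_nat (M choose s)))"
proof -
  define g where "g r s = coeff p (r + s) * (of_nat (N choose r) * of_nat (M choose s))" for r s
  have "ev p (N + M) = (\<Sum>n\<le>N+M. \<Sum>r\<le>n. g r (n - r))"
  proof -
    have V: "(of_nat ((N + M) choose n) :: 'k) = (\<Sum>r\<le>n. of_nat (N choose r) * of_nat (M choose (n - r)))" for n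
      by (simp only: vandermonde[symmetric] of_nat_sum of_nat_mult)
    show ?thesis unfolding ev_def g_def V
      by (simp add: sum_distrib_left)
  qed
  also have "\<dots> = (\<Sum>(r,s)\<in>{(r,s). r + s \<le> N + M}. g r s)"
    by (rule sum.triangle_reindex_eq[symmetric])
  also have "\<dots> = (\<Sum>(r,s)\<in>{..N} \<times> {..M}. g r s)"
  proof (rule sum.mono_neutral_right)
    show "finite {(r, s). r + s \<le> N + M}"
      by (rule finite_subset[of _ "{..N+M} \<times> {..N+M}"]) auto
    show "{..N} \<times> {..M} \<subseteq> {(r, s). r + s \<le> N + M}" by auto
    show "\<forall>i\<in>{(r, s). r + s \<le> N + M} - {..N} \<times> {..M}. (case i of (r, s) \<Rightarrow> g r s) = 0"
    proof
      fix i assume "i \<in> {(r, s). r + s \<le> N + M} - {..N} \<times> {..M}"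
      then obtain r s where i: "i = (r, s)" and "r > N \<or> s > M" by (cases i) (auto simp: not_le)
      then have "N choose r = 0 \<or> M choose s = 0" by (auto simp: binomial_eq_0)
      then show "(case i of (r, s) \<Rightarrow> g r s) = 0" unfolding i g_def by (elim disjE) (simp_all add: binomial_eq_0)
    qed
  qed
  also have "\<dots> = (\<Sum>r\<le>N. \<Sum>s\<le>M. g r s)"
    by (rule sum.cartesian_product[symmetric])
  finally show ?thesis by (simp add: g_def)
qed

lemma Sp_double:
  "Sp N M (cop_forest u) = (\<Sum>r\<le>N. \<Sum>s\<le>M. (Ctens u r s :: 'k::field) * (of_nat (N choose r) * of_nat (M choose s)))"
proof -
  have "Sp N M (cop_forest u) = sum_mset (image_mset (\<lambda>x. \<Sum>r\<le>N. \<Sum>s\<le>M. coeff (Lambda (fst x)) r * coeff (Lambda (snd x)) s * ((of_nat (N choose r) :: 'k) * of_nat (M choose s))) (cop_forest u))"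
    unfolding Sp_def ev_def
  proof (rule arg_cong[where f=sum_mset], rule image_mset_cong)
    fix x :: "forest \<times> forest"
    have "(\<Sum>n\<le>N. coeff (Lambda (fst x)) n * (of_nat (N choose n) :: 'k)) * (\<Sum>n\<le>M. coeff (Lambda (snd x)) n * of_nat (M choose n))
      = (\<Sum>r\<le>N. \<Sum>s\<le>M. coeff (Lambda (fst x)) r * coeff (Lambda (snd x)) s * ((of_nat (N choose r) :: 'k) * of_nat (M choose s)))"
      unfolding sum_product by (intro sum.cong refl) (simp add: ac_simps)
    then show "(case x of (v, w) \<Rightarrow> (\<Sum>n\<le>N. coeff (Lambda v) n * (of_nat (N choose n) :: 'k)) * (\<Sum>n\<le>M. coeff (Lambda w) n * of_nat (M choose n)))
      = (\<Sum>r\<le>N. \<Sum>s\<le>M. coeff (Lambda (fst x)) r * coeff (Lambda (snd x)) s * ((of_nat (N choose r) :: 'k) * of_nat (M choose s)))"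
      by (simp add: case_prod_beta)
  qed
  also have "\<dots> = (\<Sum>r\<le>N. \<Sum>s\<le>M. sum_mset (image_mset (\<lambda>x. coeff (Lambda (fst x)) r * coeff (Lambda (snd x)) s * ((of_nat (N choose r) :: 'k) * of_nat (M choose s))) (cop_forest u)))"
    by (simp only: sum_swap_mset)
  also have "\<dots> = (\<Sum>r\<le>N. \<Sum>s\<le>M. (Ctens u r s :: 'k) * (of_nat (N choose r) * of_nat (M choose s)))"
    unfolding Ctens_def by (simp add: sum_mset_distrib_right case_prod_beta)
  finally show ?thesis .
qed

lemma binom_inj2:
  assumes "\<And>N M. (\<Sum>r\<le>N. \<Sum>s\<le>M. c r s * (of_nat (N choose r) * of_nat (M choose s))) = (0::'k::field)"
  shows "c r s = 0"
proof -
  have A: "(\<Sum>s\<le>M. c r s * of_nat (M choose s)) = 0" for r M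
  proof (rule binom_inj[where a="\<lambda>r. \<Sum>s\<le>M. c r s * of_nat (M choose s)"])
    fix N show "(\<Sum>r\<le>N. (\<Sum>s\<le>M. c r s * of_nat (M choose s)) * of_nat (N choose r)) = 0"
    proof -
      have "(\<Sum>r\<le>N. (\<Sum>s\<le>M. c r s * of_nat (M choose s)) * of_nat (N choose r))
         = (\<Sum>r\<le>N. \<Sum>s\<le>M. c r s * (of_nat (N choose r) * of_nat (M choose s)))"
        by (rule sum.cong[OF refl]) (simp add: sum_distrib_right sum_distrib_left ac_simps)
      then show ?thesis using assms[of N M] by simp
    qed
  qed
  show ?thesis by (rule binom_inj[where a="c r"]) (rule A)
qed

lemma coeff_Lambda_cop: "coeff (Lambda u :: 'k::field poly) (r + s) = Ctens u r s"
proof -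
  have "coeff (Lambda u :: 'k poly) (r + s) - Ctens u r s = 0"
  proof (rule binom_inj2[where c="\<lambda>r s. coeff (Lambda u :: 'k poly) (r + s) - Ctens u r s"])
    fix N M
    show "(\<Sum>r\<le>N. \<Sum>s\<le>M. (coeff (Lambda u :: 'k poly) (r + s) - Ctens u r s) * (of_nat (N choose r) * of_nat (M choose s))) = 0"
      unfolding left_diff_distrib sum_subtractf ev_shift_double[symmetric] Sp_double[symmetric] main_ev_forest
      by simp
  qed
  then show ?thesis by simp
qed



lemma lin_ext_alt: assumes "degree p \<le> D" shows "lin_ext \<phi> p = (\<Sum>i\<le>D. coeff p i * \<phi> i)"
  unfolding lin_ext_def using assms
  by (intro sum.mono_neutral_left) (auto simp: coeff_eq_0)

lemma lin_ext_diff: "lin_ext (\<lambda>n. \<phi> n - \<psi> n) p = lin_ext \<phi> p - lin_ext \<psi> p"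
  by (simp add: lin_ext_def algebra_simps sum_subtractf)

lemma lin_ext_ind: "lin_ext (\<lambda>m. if m = n then 1 else 0) p = coeff p n"
proof -
  have "lin_ext (\<lambda>m. if m = n then 1 else 0) p = (\<Sum>i\<le>max n (degree p). coeff p i * (if i = n then 1 else 0))"
    by (rule lin_ext_alt) simp
  also have "\<dots> = (\<Sum>i\<le>max n (degree p). if i = n then coeff p i else 0)"
    by (rule sum.cong) auto
  also have "\<dots> = coeff p n" by simp
  finally show ?thesis .
qed

lemma lin_ext_epsA: "lin_ext epsA p = coeff p 0"
  using lin_ext_ind[of 0 p] by (simp add: epsA_def[abs_def])

lemma ev_one_pt: "ev p 1 = coeff p 0 + coeff p 1"
  by (simp add: ev_def)

lemma lin_ext_deltaA: "lin_ext deltaA p = ev p 1"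
proof -
  have "lin_ext deltaA p = (\<Sum>i\<le>max 1 (degree p). if i \<le> 1 then coeff p i else 0)"
    by (subst lin_ext_alt[of _ "max 1 (degree p)"]) (auto simp: deltaA_def intro!: sum.cong)
  also have "\<dots> = (\<Sum>i\<le>1. coeff p i)"
    by (rule sum.mono_neutral_cong_right) auto
  finally show ?thesis using ev_one_pt[of p] by simp
qed

lemma ev_Lambda_0: "ev (Lambda u :: 'k::field poly) 0 = (if u = {#} then 1 else 0)"
proof (induction u)
  case empty then show ?case by (simp add: ev_one)
next
  case (add t u)
  obtain f where t: "t = Node f" by (cases t)
  have "ev (Lambda (add_mset t u) :: 'k poly) 0 = ev (Lambda {#t#} :: 'k poly) 0 * ev (Lambda u) 0"
    using ev_Lambda_plus[of "{#t#}" u 0] by simp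
  then show ?case by (simp add: Lambda_single t ev_Lambda_Node)
qed

lemma ev_Lambda_1: "ev (Lambda u :: 'k::field poly) 1 = deltaCK u"
proof (induction u)
  case empty then show ?case by (simp add: ev_one deltaCK_def)
next
  case (add t u)
  obtain f where t: "t = Node f" by (cases t)
  have "ev (Lambda (add_mset t u) :: 'k poly) 1 = ev (Lambda {#t#} :: 'k poly) 1 * ev (Lambda u) 1"
    using ev_Lambda_plus[of "{#t#}" u 1] by simp
  then show ?case using add
    by (simp add: Lambda_single t ev_Lambda_Node ev_Lambda_0 deltaCK_def delta_tree_def)
qed

definition Th :: "(nat \<Rightarrow> 'k::field) \<Rightarrow> forest \<Rightarrow> 'k" where
  "Th \<phi> u = lin_ext \<phi> (Lambda u)"

lemma eps_Th: "epsCK = Th epsA"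
  by (auto simp: fun_eq_iff Th_def lin_ext_epsA ev_0[symmetric] ev_Lambda_0 epsCK_def)

lemma delta_Th: "deltaCK = Th deltaA"
  by (rule ext) (simp only: Th_def lin_ext_deltaA ev_Lambda_1)

lemma conv_Th: "convCK (Th \<phi>) (Th \<psi>) u = Th (convA \<phi> \<psi>) (u :: forest)"
proof -
  define p where "p = (Lambda u :: 'a poly)"
  define D where "D = Max (insert (degree p) ((\<lambda>x. max (degree (Lambda (fst x) :: 'a poly)) (degree (Lambda (snd x) :: 'a poly))) ` set_mset (cop_forest u)))"
  have Dp: "degree p \<le> D" unfolding D_def by (rule Max_ge) auto
  have Dvw: "degree (Lambda (fst x) :: 'a poly) \<le> D \<and> degree (Lambda (snd x) :: 'a poly) \<le> D" if "x \<in># cop_forest u" for x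
  proof -
    have "max (degree (Lambda (fst x) :: 'a poly)) (degree (Lambda (snd x) :: 'a poly)) \<le> D"
      unfolding D_def by (rule Max_ge) (use that in auto)
    then show ?thesis by simp
  qed
  have "convCK (Th \<phi>) (Th \<psi>) u = sum_mset (image_mset (\<lambda>x. (\<Sum>r\<le>D. coeff (Lambda (fst x) :: 'a poly) r * \<phi> r) * (\<Sum>s\<le>D. coeff (Lambda (snd x) :: 'a poly) s * \<psi> s)) (cop_forest u))"
    unfolding convCK_def Th_def
  proof (rule arg_cong[where f=sum_mset], rule image_mset_cong, goal_cases)
    case (1 x)
    then have "degree (Lambda (fst x) :: 'a poly) \<le> D" "degree (Lambda (snd x) :: 'a poly) \<le> D" using Dvw by auto
    then show ?case by (simp add: case_prod_beta lin_ext_alt)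
  qed
  also have "\<dots> = (\<Sum>r\<le>D. \<Sum>s\<le>D. sum_mset (image_mset (\<lambda>x. coeff (Lambda (fst x) :: 'a poly) r * coeff (Lambda (snd x) :: 'a poly) s * (\<phi> r * \<psi> s)) (cop_forest u)))"
    by (simp add: sum_swap_mset sum_product ac_simps)
  also have "\<dots> = (\<Sum>r\<le>D. \<Sum>s\<le>D. Ctens u r s * (\<phi> r * \<psi> s))"
    unfolding Ctens_def by (simp add: sum_mset_distrib_right case_prod_beta)
  also have "\<dots> = (\<Sum>r\<le>D. \<Sum>s\<le>D. coeff p (r + s) * (\<phi> r * \<psi> s))"
    by (simp add: coeff_Lambda_cop p_def)
  also have "\<dots> = (\<Sum>(r,s)\<in>{..D} \<times> {..D}. coeff p (r + s) * (\<phi> r * \<psi> s))"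
    by (rule sum.cartesian_product)
  also have "\<dots> = (\<Sum>(r,s)\<in>{(r,s). r + s \<le> D}. coeff p (r + s) * (\<phi> r * \<psi> s))"
  proof (rule sum.mono_neutral_right)
    show "finite ({..D} \<times> {..D})" by simp
    show "{(r, s). r + s \<le> D} \<subseteq> {..D} \<times> {..D}" by auto
    show "\<forall>i\<in>{..D} \<times> {..D} - {(r, s). r + s \<le> D}. (case i of (r, s) \<Rightarrow> coeff p (r + s) * (\<phi> r * \<psi> s)) = 0"
    proof
      fix i assume i: "i \<in> {..D} \<times> {..D} - {(r, s). r + s \<le> D}"
      obtain a b where ab: "i = (a, b)" by (cases i)
      have "coeff p (a + b) = 0" using i Dp unfolding ab by (intro coeff_eq_0) auto
      then show "(case i of (r, s) \<Rightarrow> coeff p (r + s) * (\<phi> r * \<psi> s)) = 0" by (simp add: ab)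
    qed
  qed
  also have "\<dots> = (\<Sum>n\<le>D. \<Sum>r\<le>n. coeff p (r + (n - r)) * (\<phi> r * \<psi> (n - r)))"
    by (rule sum.triangle_reindex_eq)
  also have "\<dots> = (\<Sum>n\<le>D. coeff p n * convA \<phi> \<psi> n)"
    by (simp add: convA_def sum_distrib_left)
  also have "\<dots> = Th (convA \<phi> \<psi>) u"
    unfolding Th_def p_def[symmetric] by (rule lin_ext_alt[symmetric, OF Dp])
  finally show ?thesis .
qed

lemma pow_Th: "convCK_pow (Th \<phi>) n = Th (convA_pow \<phi> n)"
proof (induction n)
  case 0 then show ?case by (simp add: eps_Th)
next
  case (Suc n)
  have "convCK_pow (Th \<phi>) (Suc n) = convCK (Th \<phi>) (Th (convA_pow \<phi> n))" by (simp add: Suc.IH)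
  also have "\<dots> = Th (convA \<phi> (convA_pow \<phi> n))" by (rule ext, rule conv_Th)
  finally show ?case by simp
qed

lemma convA_ind: "convA (\<lambda>u. deltaA u - epsA u) g m = (if m = 0 then 0 else g (m - 1))"
proof -
  have "convA (\<lambda>u. deltaA u - epsA u) g m = (\<Sum>r\<le>m. if r = 1 then g (m - r) else 0)"
    unfolding convA_def by (rule sum.cong) (auto simp: deltaA_def epsA_def)
  then show ?thesis by simp
qed

lemma powA_ind: "convA_pow (\<lambda>u. deltaA u - epsA u) n = (\<lambda>m. if m = n then 1 else 0)"
proof (induction n)
  case 0 then show ?case by (simp add: fun_eq_iff epsA_def)
next
  case (Suc n) then show ?case by (auto simp: fun_eq_iff convA_ind)
qed



lemma logA_delta: "logA (deltaA :: nat \<Rightarrow> 'k::field_char_0) m = (if m = 0 then 0 else (-1) ^ (m + 1) / of_nat m)"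
proof -
  define c :: "nat \<Rightarrow> 'k" where "c n = (-1) ^ (n + 1) / of_nat n" for n
  have T: "(\<lambda>n. ((-1) ^ (n + 1) / of_nat n) * convA_pow (\<lambda>u. deltaA u - epsA u) n m) = (\<lambda>n. if n = m then c m else (0::'k))"
    by (auto simp: fun_eq_iff powA_ind c_def)
  have cnz: "m \<ge> 1 \<Longrightarrow> c m \<noteq> 0" by (simp add: c_def)
  show ?thesis
  proof (cases "m = 0")
    case True
    have "{n. 1 \<le> n \<and> (if n = m then c m else 0) \<noteq> 0} = {}" using True by auto
    then show ?thesis unfolding logA_def Let_def T using True by simp
  next
    case False
    then have "{n. 1 \<le> n \<and> (if n = m then c m else 0) \<noteq> 0} = {m}" using cnz by auto
    then show ?thesis unfolding logA_def Let_def T using False by (simp add: c_def)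
  qed
qed

lemma logCK_delta: "logCK (deltaCK :: forest \<Rightarrow> 'k::field_char_0) u = lin_ext (logA deltaA) (Lambda u)"
proof -
  define p where "p = (Lambda u :: 'k poly)"
  define c :: "nat \<Rightarrow> 'k" where "c n = (-1) ^ (n + 1) / of_nat n" for n
  have sub: "(\<lambda>v. deltaCK v - epsCK v) = Th (\<lambda>m. deltaA m - (epsA m :: 'k))"
    by (simp add: fun_eq_iff delta_Th eps_Th Th_def lin_ext_diff)
  have pw: "convCK_pow (\<lambda>v. deltaCK v - epsCK v) n u = coeff p n" for n
    unfolding sub pow_Th powA_ind Th_def p_def by (rule lin_ext_ind)
  have "logCK deltaCK u = (\<Sum>n\<in>{n. 1 \<le> n \<and> c n * coeff p n \<noteq> 0}. c n * coeff p n)"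
    unfolding logCK_def Let_def pw c_def ..
  also have "\<dots> = (\<Sum>n\<in>{1..degree p}. c n * coeff p n)"
  proof (rule sum.mono_neutral_left)
    show "{n. 1 \<le> n \<and> c n * coeff p n \<noteq> 0} \<subseteq> {1..degree p}"
      by (auto simp: coeff_eq_0 intro: ccontr dest: le_degree)
  qed auto
  also have "\<dots> = (\<Sum>i\<le>degree p. coeff p i * logA deltaA i)"
    by (rule sum.mono_neutral_cong_left) (auto simp: logA_delta c_def)
  also have "\<dots> = lin_ext (logA deltaA) p" by (simp add: lin_ext_def)
  finally show ?thesis by (simp add: p_def)
qed

theorem mainTheorem16:
  shows "logA (deltaA :: nat \<Rightarrow> 'k::field_char_0) 0 = 0
    \<and> (\<forall>s\<ge>1. logA (deltaA :: nat \<Rightarrow> 'k) s = (-1) ^ (s + 1) / of_nat s)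
    \<and> (\<forall>u. logCK (deltaCK :: forest \<Rightarrow> 'k) u = lin_ext (logA deltaA) (Lambda u))"
  by (simp add: logA_delta logCK_delta)

end
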